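(* Let $X$ be a topological space, let $A \subseteq X$ be an open subset, and let $p : X \to X/A$ be the quotient map collapsing $A$ to a single point $* = p(A)$. Let $\overline{\{*\}}$ denote the closure of $\{*\}$ in $X/A$. Then every loop $\alpha : [0,1] \to X/A$ based at $*$ with $\alpha([0,1]) \subseteq \overline{\{*\}}$ is nullhomotopic relative to the endpoints.
   Context: For $A\subseteq X$, $X/A$ denotes the quotient space obtained from $X$ by identifying all points of $A$ to a single point, denoted $*$, and $p:X\to X/A$ is the quotient map. A loop based at $x$ is a continuous map $\alpha:[0,1]\to X$ with $\alpha(0)=\alpha(1)=x$; homotopies of loops are relative to the endpoints. *)

theory Defs
  imports "HOL-Analysis.Analysis"
begin

definition collapse :: "'a set \<Rightarrow> 'a \<Rightarrow> 'a set" where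
  "collapse A x = (if x \<in> A then A else {x})"

text \<open>The point * = A is
  always included (so X/{} is X with an added isolated point, the usual convention).\<close>
definition collapse_topology :: "'a topology \<Rightarrow> 'a set \<Rightarrow> 'a set topology" where
  "collapse_topology X A =
     topology (\<lambda>U. U \<subseteq> collapse A ` topspace X \<union> {A} \<and>
                  openin X {x \<in> topspace X. collapse A x \<in> U})"

end

theory Submission
  imports Defs
begin

lemma oT: "openin X S \<Longrightarrow> openin Y T \<Longrightarrow> openin (prod_topology X Y) (S \<times> T)"
  by (simp add: openin_prod_Times_iff)

theorem lemma3p1:
  fixes X :: "'a topology" and A :: "'a set" and \<alpha> :: "real \<Rightarrow> 'a set"
  assumes "openin X A"
    and "pathin (collapse_topology X A) \<alpha>"
    and "\<alpha> 0 = A" and "\<alpha> 1 = A"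
    and "\<alpha> ` {0..1} \<subseteq> (collapse_topology X A) closure_of {A}"
  shows "homotopic_with (\<lambda>h. h 0 = A \<and> h 1 = A) (top_of_set {0..1})
           (collapse_topology X A) \<alpha> (\<lambda>t. A)"
proof -
  define Y where "Y = collapse_topology X A"
  have ca: "continuous_map (top_of_set {0..1}) Y \<alpha>"
    using assms(2) by (simp only: Y_def pathin_def)
  have ts: "\<alpha> t \<in> topspace Y" if "t \<in> {0..1}" for t
    using continuous_map_image_subset_topspace[OF ca] that by auto
  have At: "A \<in> topspace Y" using ts[of 0] assms(3) by simp
  have cl: "A \<in> U" if "openin Y U" "t \<in> {0..1}" "\<alpha> t \<in> U" for U t
  proof -
    have "\<alpha> t \<in> Y closure_of {A}" using assms(5) that(2) unfolding Y_def by blast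
    then show ?thesis using that unfolding in_closure_of by blast
  qed
  define h where "h = (\<lambda>(s::real,t). if s = 0 then \<alpha> t else A)"
  have cont: "continuous_map (prod_topology (top_of_set {0..1}) (top_of_set {0..1})) Y h"
    unfolding continuous_map_def
  proof (intro conjI allI impI)
    show "h \<in> topspace (prod_topology (top_of_set {0..1}) (top_of_set {0..1})) \<rightarrow> topspace Y"
      using ts At by (auto simp: h_def)
  next
    fix U assume U: "openin Y U"
    show "openin (prod_topology (top_of_set {0..1}) (top_of_set {0..1}))
       {x \<in> topspace (prod_topology (top_of_set {0..1}) (top_of_set {0..1})). h x \<in> U}"
    proof (cases "A \<in> U")
      case True
      have o1: "openin (top_of_set {0..1}) {t \<in> topspace (top_of_set {0..1}). \<alpha> t \<in> U}"
        using openin_continuous_map_preimage[OF ca U] .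
      have o2: "openin (top_of_set {0..1::real}) ({0..1} \<inter> {0<..})"
        by (rule openin_open_Int) auto
      have eq: "{x \<in> topspace (prod_topology (top_of_set {0..1}) (top_of_set {0..1})). h x \<in> U}
        = ({0..1} \<times> {t \<in> topspace (top_of_set {0..1}). \<alpha> t \<in> U}) \<union> (({0..1} \<inter> {0<..}) \<times> {0..1})"
        using True by (auto simp: h_def split: if_splits)
      have o3: "openin (top_of_set {0..1::real}) {0..1}" by simp
      show ?thesis unfolding eq
        by (intro openin_Un oT o1 o2 o3)
    next
      case False
      have "{x \<in> topspace (prod_topology (top_of_set {0..1}) (top_of_set {0..1})). h x \<in> U} = {}"
        using False cl[OF U] by (auto simp: h_def split: if_splits)
      then show ?thesis by (metis openin_empty)
    qed
  qed
  show ?thesis unfolding homotopic_with_def Y_def[symmetric]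
    apply (rule exI[of _ h])
    using cont assms(3,4) by (auto simp: h_def)
qed

end
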